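(* Let $m\in\mathbb{Z}_{>0}$, $|X|=m$, $S=\{-1/2,1/2\}^X$, $B=\{-1,1\}^X$, and let $\ell(y,u)=(y-u)^2$ for $y\in\{-1,1\}$, $u\in[-1,1]$. Then for every $\varepsilon,\delta\ge0$, $\#\mathsf{CompR}(S,B,\ell,\varepsilon,\delta)=0$. However, for the uniform distribution $\mu_X$ over $X$, for any $\varepsilon\in(0,3/4)$ and $\delta\in(0,1/2)$, $\#\mathsf{CompR}^{\mu_X}(B,S,\ell,\varepsilon,\delta)\ge\big(1-\sqrt{1/4+\varepsilon}\big)m$.
   Context: Comparative regression $\mathsf{CompR}_n(S,B,\ell,\varepsilon,\delta)$ (for $S\subseteq([-1,1]\cup\{*\})^X$, total $B\subseteq[-1,1]^X$): (possibly randomized) learners taking $n$ points of $X\times\{-1,1\}$ and outputting $f:X\to[-1,1]$ such that for every distribution $\mu$ on $X\times\{-1,1\}$ for which some $s\in S$ has $\Pr_{x\sim\mu|_X}[s(x)\ne*]=1$ and $\mathbb{E}_\mu[y|x]=s(x)$, with probability $\ge1-\delta$ over $n$ i.i.d. samples, $\mathbb{E}_\mu[\ell(y,f(x))]\le\inf_{b\in B}\mathbb{E}_\mu[\ell(y,b(x))]+\varepsilon$. The distribution-specific version $\mathsf{CompR}^{\mu_X}_n$ requires the guarantee only for $\mu$ with $\mu|_X=\mu_X$. $\#$ denotes the least such $n$. *)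

theory Defs
  imports "HOL-Probability.Probability" "HOL-Library.Extended_Nat"
begin

text \<open>Partial concepts s : X \<rightarrow> [-1,1] \<union> {*} are 'x \<Rightarrow> real option (None = *).\<close>

definition label_dist :: "('x \<times> real) pmf \<Rightarrow> bool" where
  "label_dist \<mu> \<longleftrightarrow> set_pmf \<mu> \<subseteq> UNIV \<times> {-1, 1}"

definition cond_label_exp :: "('x \<times> real) pmf \<Rightarrow> 'x \<Rightarrow> real" where
  "cond_label_exp \<mu> x = measure_pmf.expectation (cond_pmf \<mu> {p. fst p = x}) snd"

definition realizable_by :: "('x \<Rightarrow> real option) set \<Rightarrow> ('x \<times> real) pmf \<Rightarrow> bool" where
  "realizable_by S \<mu> \<longleftrightarrow>
     (\<exists>s\<in>S. \<forall>x\<in>set_pmf (map_pmf fst \<mu>). s x \<noteq> None \<and> cond_label_exp \<mu> x = the (s x))"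

definition risk :: "(real \<Rightarrow> real \<Rightarrow> real) \<Rightarrow> ('x \<times> real) pmf \<Rightarrow> ('x \<Rightarrow> real) \<Rightarrow> real" where
  "risk l \<mu> f = measure_pmf.expectation \<mu> (\<lambda>(x, y). l y (f x))"

definition learner :: "(('x \<times> real) list \<Rightarrow> ('x \<Rightarrow> real) measure) \<Rightarrow> bool" where
  "learner L \<longleftrightarrow> (\<forall>D. prob_space (L D) \<and> sets (L D) = sets borel \<and>
                        (AE f in L D. \<forall>x. -1 \<le> f x \<and> f x \<le> 1))"

definition success_prob ::
  "nat \<Rightarrow> (('x \<times> real) list \<Rightarrow> ('x \<Rightarrow> real) measure) \<Rightarrow> ('x \<Rightarrow> real) set
     \<Rightarrow> (real \<Rightarrow> real \<Rightarrow> real) \<Rightarrow> real \<Rightarrow> ('x \<times> real) pmf \<Rightarrow> real" where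
  "success_prob n L B l \<epsilon> \<mu> =
     measure_pmf.expectation (replicate_pmf n \<mu>)
       (\<lambda>D. measure (L D) {f. risk l \<mu> f \<le> (INF b\<in>B. risk l \<mu> b) + \<epsilon>})"

text \<open>L is a CompR_n(S,B,l,eps,delta) learner, with the guarantee required for all
  distributions satisfying P (P = \<lambda>_. True for the distribution-free version,
  P = (\<lambda>\<mu>. map_pmf fst \<mu> = \<mu>X) for the distribution-specific version).\<close>
definition is_CompR ::
  "(('x \<times> real) pmf \<Rightarrow> bool) \<Rightarrow> nat \<Rightarrow> ('x \<Rightarrow> real option) set \<Rightarrow> ('x \<Rightarrow> real) set
     \<Rightarrow> (real \<Rightarrow> real \<Rightarrow> real) \<Rightarrow> real \<Rightarrow> real
     \<Rightarrow> (('x \<times> real) list \<Rightarrow> ('x \<Rightarrow> real) measure) \<Rightarrow> bool" where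
  "is_CompR P n S B l \<epsilon> \<delta> L \<longleftrightarrow> learner L \<and>
     (\<forall>\<mu>. label_dist \<mu> \<and> P \<mu> \<and> realizable_by S \<mu> \<longrightarrow> success_prob n L B l \<epsilon> \<mu> \<ge> 1 - \<delta>)"

definition CompR_num ::
  "(('x \<times> real) pmf \<Rightarrow> bool) \<Rightarrow> ('x \<Rightarrow> real option) set \<Rightarrow> ('x \<Rightarrow> real) set
     \<Rightarrow> (real \<Rightarrow> real \<Rightarrow> real) \<Rightarrow> real \<Rightarrow> real \<Rightarrow> enat" where
  "CompR_num P S B l \<epsilon> \<delta> =
     (if \<exists>n L. is_CompR P n S B l \<epsilon> \<delta> L
      then enat (LEAST n. \<exists>L. is_CompR P n S B l \<epsilon> \<delta> L) else \<infinity>)"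

definition sq_loss :: "real \<Rightarrow> real \<Rightarrow> real" where
  "sq_loss y u = (y - u)\<^sup>2"

end

theory Submission
  imports Defs
begin

lemma E_sum:
  fixes \<mu> :: "('x::finite \<times> real) pmf"
  assumes "label_dist \<mu>"
  shows "measure_pmf.expectation \<mu> g = (\<Sum>x\<in>UNIV. g (x,1) * pmf \<mu> (x,1) + g (x,-1) * pmf \<mu> (x,-1))"
proof -
  have "measure_pmf.expectation \<mu> g = (\<Sum>a\<in>UNIV \<times> {-1,1}. g a * pmf \<mu> a)"
    by (rule integral_measure_pmf_real) (use assms in \<open>auto simp: label_dist_def\<close>)
  also have "\<dots> = (\<Sum>x\<in>UNIV. \<Sum>y\<in>{-1,1}. g (x,y) * pmf \<mu> (x,y))"
    unfolding sum.cartesian_product by (simp add: case_prod_unfold)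
  also have "\<dots> = (\<Sum>x\<in>UNIV. g (x,1) * pmf \<mu> (x,1) + g (x,-1) * pmf \<mu> (x,-1))"
    by (simp add: add.commute)
  finally show ?thesis .
qed

lemma cle:
  fixes \<mu> :: "('x::finite \<times> real) pmf"
  assumes "label_dist \<mu>" "x \<in> set_pmf (map_pmf fst \<mu>)"
  shows "pmf \<mu> (x,1) + pmf \<mu> (x,-1) > 0 \<and>
    cond_label_exp \<mu> x = (pmf \<mu> (x,1) - pmf \<mu> (x,-1)) / (pmf \<mu> (x,1) + pmf \<mu> (x,-1))"
proof -
  define s where "s = {p::'x\<times>real. fst p = x}"
  have ne: "set_pmf \<mu> \<inter> s \<noteq> {}" using assms(2) by (auto simp: s_def)
  define c where "c = cond_pmf \<mu> s"
  define P where "P = measure_pmf.prob \<mu> s"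
  have ld: "label_dist c" using assms(1) ne by (auto simp: c_def label_dist_def set_cond_pmf)
  have pc: "pmf c (x',y) = (if x' = x then pmf \<mu> (x',y) / P else 0)" for x' y
    using ne by (simp add: c_def pmf_cond P_def s_def)
  have "1 = measure_pmf.expectation c (\<lambda>_. 1::real)" by simp
  also have "\<dots> = (pmf \<mu> (x,1) + pmf \<mu> (x,-1)) / P"
    unfolding E_sum[OF ld] pc by (simp add: if_distrib add_divide_distrib cong: if_cong)
  finally have P1: "(pmf \<mu> (x,1) + pmf \<mu> (x,-1)) / P = 1" by simp
  hence Pne: "P \<noteq> 0" by auto
  hence Peq: "P = pmf \<mu> (x,1) + pmf \<mu> (x,-1)" using P1 by (simp add: field_simps)
  have "cond_label_exp \<mu> x = measure_pmf.expectation c snd" by (simp add: cond_label_exp_def c_def s_def)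
  also have "\<dots> = (pmf \<mu> (x,1) - pmf \<mu> (x,-1)) / P"
    unfolding E_sum[OF ld] pc by (simp add: if_distrib diff_divide_distrib cong: if_cong)
  finally show ?thesis using Peq Pne by (metis P1 pmf_nonneg add_nonneg_nonneg less_eq_real_def zero_neq_one div_0)
qed

lemma risk_sum:
  fixes \<mu> :: "('x::finite \<times> real) pmf"
  assumes "label_dist \<mu>"
  shows "risk l \<mu> f = (\<Sum>x\<in>UNIV. l 1 (f x) * pmf \<mu> (x,1) + l (-1) (f x) * pmf \<mu> (x,-1))"
  unfolding risk_def E_sum[OF assms] by simp

lemma coord_cont[continuous_intros]: "continuous_on A (\<lambda>f::'x \<Rightarrow> real. f x)"
  by (rule continuous_on_subset[OF continuous_on_product_coordinates]) simp

lemma risk_set_borel: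
  fixes \<mu> :: "('x::finite \<times> real) pmf"
  assumes "label_dist \<mu>"
  shows "{f. risk sq_loss \<mu> f \<le> c} \<in> sets (borel :: ('x \<Rightarrow> real) measure)"
proof -
  have "closed {f::'x\<Rightarrow>real. (\<Sum>x\<in>UNIV. sq_loss 1 (f x) * pmf \<mu> (x,1) + sq_loss (-1) (f x) * pmf \<mu> (x,-1)) \<le> c}"
    by (rule closed_Collect_le) (auto simp: sq_loss_def intro!: continuous_intros)
  thus ?thesis unfolding risk_sum[OF assms] by (rule borel_closed)
qed

lemma ratio_aux:
  fixes a b :: real
  assumes "a + b > 0" "(a-b)/(a+b) = -1/2 \<or> (a-b)/(a+b) = 1/2"
  shows "a = 3*b \<or> b = 3*a"
proof -
  have ne: "a + b \<noteq> 0" using assms(1) by simp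
  from assms(2) show ?thesis
  proof
    assume "(a-b)/(a+b) = -1/2"
    hence "2*(a - b) = -(a+b)" using ne by (simp add: field_simps)
    hence "b = 3*a" by (simp add: algebra_simps)
    thus ?thesis by simp
  next
    assume "(a-b)/(a+b) = 1/2"
    hence "2*(a - b) = (a+b)" using ne by (simp add: field_simps)
    hence "a = 3*b" by (simp add: algebra_simps)
    thus ?thesis by simp
  qed
qed

lemma part1:
  fixes \<epsilon> \<delta> :: real
  assumes "\<epsilon> \<ge> 0" "\<delta> \<ge> 0"
  shows "CompR_num (\<lambda>_. True) {s :: 'x::finite \<Rightarrow> real option. \<forall>x. s x \<in> {Some (-1/2), Some (1/2)}}
     {b :: 'x \<Rightarrow> real. \<forall>x. b x \<in> {-1, 1}} sq_loss \<epsilon> \<delta> = 0"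
proof -
  define S where "S = {s :: 'x::finite \<Rightarrow> real option. \<forall>x. s x \<in> {Some (-1/2), Some (1/2)}}"
  define B where "B = {b :: 'x \<Rightarrow> real. \<forall>x. b x \<in> {-1, 1}}"
  define L0 where "L0 = (\<lambda>D::('x \<times> real) list. return borel (\<lambda>x::'x. 0::real))"
  have lrn: "learner L0"
    unfolding learner_def L0_def by (auto simp: prob_space_return AE_return)
  have good: "risk sq_loss \<mu> (\<lambda>x. 0) \<le> (INF b\<in>B. risk sq_loss \<mu> b) + \<epsilon>"
    if ld: "label_dist \<mu>" and rz: "realizable_by S \<mu>" for \<mu>
  proof -
    obtain s where sS: "s \<in> S" and hs: "\<forall>x\<in>set_pmf (map_pmf fst \<mu>). s x \<noteq> None \<and> cond_label_exp \<mu> x = the (s x)"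
      using rz unfolding realizable_by_def by blast
    have one: "(\<Sum>x\<in>UNIV. pmf \<mu> (x,1) + pmf \<mu> (x,-1)) = 1"
      using E_sum[OF ld, of "\<lambda>_. 1"] by simp
    have r0: "risk sq_loss \<mu> (\<lambda>x. 0) = 1"
      unfolding risk_sum[OF ld] using one by (simp add: sq_loss_def)
    have rb: "1 \<le> risk sq_loss \<mu> b" if "b \<in> B" for b
    proof -
      have "(pmf \<mu> (x,1) + pmf \<mu> (x,-1)) \<le> sq_loss 1 (b x) * pmf \<mu> (x,1) + sq_loss (-1) (b x) * pmf \<mu> (x,-1)" for x
      proof (cases "x \<in> set_pmf (map_pmf fst \<mu>)")
        case True
        have sx: "s x = Some (-1/2) \<or> s x = Some (1/2)" using sS by (auto simp: S_def)
        have c: "cond_label_exp \<mu> x = the (s x)" using hs True by blast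
        have pos: "pmf \<mu> (x,1) + pmf \<mu> (x,-1) > 0"
          and eq: "cond_label_exp \<mu> x = (pmf \<mu> (x,1) - pmf \<mu> (x,-1)) / (pmf \<mu> (x,1) + pmf \<mu> (x,-1))"
          using cle[OF ld True] by auto
        have "(pmf \<mu> (x,1) - pmf \<mu> (x,-1)) / (pmf \<mu> (x,1) + pmf \<mu> (x,-1)) = -1/2 \<or>
              (pmf \<mu> (x,1) - pmf \<mu> (x,-1)) / (pmf \<mu> (x,1) + pmf \<mu> (x,-1)) = 1/2"
          using sx c eq by auto
        hence "pmf \<mu> (x,1) = 3 * pmf \<mu> (x,-1) \<or> pmf \<mu> (x,-1) = 3 * pmf \<mu> (x,1)"
          using pos ratio_aux by blast
        moreover have "b x = 1 \<or> b x = -1" using that by (auto simp: B_def)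
        ultimately show ?thesis using pmf_nonneg[of \<mu> "(x,1)"] pmf_nonneg[of \<mu> "(x,-1)"]
          by (auto simp: sq_loss_def)
      next
        case False
        hence "(x,1) \<notin> set_pmf \<mu>" "(x,-1) \<notin> set_pmf \<mu>" by (auto simp: image_iff)
        thus ?thesis by (simp add: set_pmf_eq)
      qed
      hence "(\<Sum>x\<in>UNIV. pmf \<mu> (x,1) + pmf \<mu> (x,-1)) \<le> risk sq_loss \<mu> b"
        unfolding risk_sum[OF ld] by (intro sum_mono) auto
      thus ?thesis using one by simp
    qed
    have "(\<lambda>_. 1) \<in> B" by (simp add: B_def)
    hence "B \<noteq> {}" by blast
    hence "1 \<le> (INF b\<in>B. risk sq_loss \<mu> b)" using rb by (intro cINF_greatest) auto
    thus ?thesis using r0 assms by simp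
  qed
  have "is_CompR (\<lambda>_. True) 0 S B sq_loss \<epsilon> \<delta> L0"
    unfolding is_CompR_def
  proof (intro conjI allI impI lrn)
    fix \<mu> :: "('x \<times> real) pmf"
    assume h: "label_dist \<mu> \<and> True \<and> realizable_by S \<mu>"
    have "success_prob 0 L0 B sq_loss \<epsilon> \<mu> = 1"
      unfolding success_prob_def L0_def using risk_set_borel[of \<mu>] h good[of \<mu>]
      by (simp add: measure_return)
    thus "1 - \<delta> \<le> success_prob 0 L0 B sq_loss \<epsilon> \<mu>" using assms by simp
  qed
  hence "CompR_num (\<lambda>_. True) S B sq_loss \<epsilon> \<delta> = enat 0"
    unfolding CompR_num_def by (auto intro!: Least_eq_0)
  thus ?thesis by (simp add: S_def B_def zero_enat_def)
qed


lemma replicate_map_pmf: "replicate_pmf n (map_pmf g p) = map_pmf (map g) (replicate_pmf n p)"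
  by (induction n) (simp_all add: map_pmf_def bind_assoc_pmf bind_return_pmf)

lemma finite_funs: "finite F \<Longrightarrow> finite {f :: 'x::finite \<Rightarrow> 'b. \<forall>x. f x \<in> F}"
proof -
  assume "finite F"
  hence "finite (PiE UNIV (\<lambda>_::'x. F))" by (intro finite_PiE) auto
  moreover have "PiE UNIV (\<lambda>_::'x. F) = {f. \<forall>x. f x \<in> F}" by (auto simp: PiE_UNIV_domain Pi_def)
  ultimately show ?thesis by simp
qed

lemma prob_disj:
  assumes "prob_space M" "A \<inter> A' = {}"
  shows "measure M A + measure M A' \<le> 1"
proof -
  interpret prob_space M by fact
  show ?thesis
  proof (cases "A \<in> sets M \<and> A' \<in> sets M")
    case True
    hence "measure M (A \<union> A') = measure M A + measure M A'"
      using assms(2) by (intro finite_measure_Union) auto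
    thus ?thesis using prob_le_1[of "A \<union> A'"] by simp
  next
    case False
    thus ?thesis using prob_le_1[of A] prob_le_1[of A'] measure_notin_sets[of A M] measure_notin_sets[of A' M]
      by auto
  qed
qed

lemma risk_mu:
  "risk sq_loss (map_pmf (\<lambda>x. (x, b x)) (pmf_of_set (UNIV :: 'x::finite set))) f
     = (\<Sum>x\<in>UNIV. (b x - f x)^2) / CARD('x)"
  by (simp add: risk_def sq_loss_def integral_pmf_of_set)

lemma cond_mu:
  fixes b :: "'x::finite \<Rightarrow> real"
  shows "cond_label_exp (map_pmf (\<lambda>x. (x, b x)) (pmf_of_set (UNIV :: 'x set))) x = b x"
proof -
  let ?\<mu> = "map_pmf (\<lambda>x. (x, b x)) (pmf_of_set (UNIV :: 'x set))"
  let ?s = "{p::'x\<times>real. fst p = x}"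
  have "(x, b x) \<in> set_pmf ?\<mu> \<inter> ?s" by auto
  hence ne: "set_pmf ?\<mu> \<inter> ?s \<noteq> {}" by blast
  have "set_pmf (cond_pmf ?\<mu> ?s) \<subseteq> {(x, b x)}" using ne by (auto simp: set_cond_pmf)
  hence "cond_pmf ?\<mu> ?s = return_pmf (x, b x)" by (simp add: set_pmf_subset_singleton)
  thus ?thesis by (simp add: cond_label_exp_def)
qed


lemma part2:
  fixes \<epsilon> \<delta> :: real and L :: "('x::finite \<times> real) list \<Rightarrow> ('x \<Rightarrow> real) measure"
  assumes eps: "0 < \<epsilon>" and del: "\<delta> < 1/2"
    and CR: "is_CompR (\<lambda>\<mu>. map_pmf fst \<mu> = pmf_of_set (UNIV::'x set)) n
        {b :: 'x \<Rightarrow> real option. \<forall>x. b x \<in> {Some (-1), Some 1}}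
        {s :: 'x \<Rightarrow> real. \<forall>x. s x \<in> {-1/2, 1/2}} sq_loss \<epsilon> \<delta> L"
  shows "(3/4 - \<epsilon>) * real CARD('x) \<le> real n"
proof (rule ccontr)
  assume "\<not> ?thesis"
  hence small: "real n < (3/4 - \<epsilon>) * real CARD('x)" by simp
  define m where "m = CARD('x)"
  define U where "U = pmf_of_set (UNIV::'x set)"
  define BB where "BB = {b :: 'x \<Rightarrow> real. \<forall>x. b x \<in> {-1,1}}"
  define St where "St = {s :: 'x \<Rightarrow> real. \<forall>x. s x \<in> {-1/2, 1/2}}"
  define Bp where "Bp = {b :: 'x \<Rightarrow> real option. \<forall>x. b x \<in> {Some (-1), Some 1}}"
  define mu where "mu b = map_pmf (\<lambda>x. (x, b x)) U" for b :: "'x \<Rightarrow> real"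
  define A where "A b = {f. risk sq_loss (mu b) f \<le> (INF s\<in>St. risk sq_loss (mu b) s) + \<epsilon>}" for b
  define D where "D b xs = map (\<lambda>x. (x, b x)) xs" for b :: "'x \<Rightarrow> real" and xs
  define h where "h b xs = measure (L (D b xs)) (A b)" for b xs
  have lrn: "learner L" using CR by (simp add: is_CompR_def)
  have ps: "prob_space (L D')" for D' using lrn by (simp add: learner_def)
  have mpos: "m > 0" unfolding m_def by simp
  have finBB: "finite BB" unfolding BB_def by (rule finite_funs) simp
  have finSt: "finite St" unfolding St_def by (rule finite_funs) simp
  have BBne: "BB \<noteq> {}"
  proof -
    have "(\<lambda>_. 1) \<in> BB" by (simp add: BB_def)
    thus ?thesis by blast
  qed
  have succ: "1 - \<delta> \<le> success_prob n L St sq_loss \<epsilon> (mu b)" if "b \<in> BB" for b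
  proof -
    have "label_dist (mu b)" using that by (auto simp: label_dist_def mu_def BB_def)
    moreover have "map_pmf fst (mu b) = pmf_of_set UNIV" by (simp add: mu_def U_def pmf.map_comp o_def)
    moreover have "realizable_by Bp (mu b)"
      unfolding realizable_by_def
      by (rule bexI[of _ "\<lambda>x. Some (b x)"]) (use that in \<open>auto simp: Bp_def BB_def mu_def U_def cond_mu\<close>)
    ultimately show ?thesis using CR by (auto simp: is_CompR_def Bp_def St_def)
  qed
  have sp: "success_prob n L St sq_loss \<epsilon> (mu b) = measure_pmf.expectation (replicate_pmf n U) (h b)" for b
    by (simp add: success_prob_def mu_def replicate_map_pmf h_def[abs_def] D_def A_def)
  have INFb: "(INF s\<in>St. risk sq_loss (mu b) s) \<le> 1/4" if "b \<in> BB" for b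
  proof -
    have "(\<lambda>x. b x / 2) \<in> St" using that by (auto simp: St_def BB_def)
    hence "(INF s\<in>St. risk sq_loss (mu b) s) \<le> risk sq_loss (mu b) (\<lambda>x. b x / 2)"
      by (intro cINF_lower) (auto intro!: bdd_below_finite finite_imageI finSt)
    also have "\<dots> = 1/4"
    proof -
      have "(b x - b x / 2)^2 = 1/4" for x
      proof -
        have "b x = -1 \<or> b x = 1" using that by (auto simp: BB_def)
        thus ?thesis by (auto simp: power2_eq_square)
      qed
      hence hx: "\<And>x. (b x - b x / 2)^2 = 1/4" .
      have "risk sq_loss (mu b) (\<lambda>x. b x / 2) = (\<Sum>x\<in>UNIV. (b x - b x / 2)^2) / m"
        unfolding mu_def U_def risk_mu m_def by simp
      also have "\<dots> = (\<Sum>x\<in>(UNIV::'x set). 1/4) / m" by (simp only: hx)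
      finally have "risk sq_loss (mu b) (\<lambda>x. b x / 2) = (\<Sum>x\<in>(UNIV::'x set). 1/4) / m" .
      thus ?thesis using mpos by (simp add: m_def)
    qed
    finally show ?thesis .
  qed
  have key: "(\<Sum>b\<in>BB. h b xs) \<le> card BB / 2" if xs: "xs \<in> set_pmf (replicate_pmf n U)" for xs
  proof -
    have len: "length xs = n" using xs by (simp add: set_replicate_pmf)
    define V where "V = UNIV - set xs"
    have cardV: "real (card V) > (1/4 + \<epsilon>) * m"
    proof -
      have "card (set xs) \<le> n" using len card_length by metis
      moreover have "card V = m - card (set xs)" unfolding V_def m_def by (simp add: card_Diff_subset)
      moreover have "card (set xs) \<le> m" unfolding m_def by (simp add: card_mono)
      ultimately have "real (card V) \<ge> real m - real n" by simp
      thus ?thesis using small unfolding m_def by (simp add: algebra_simps)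
    qed
    define fl where "fl b = (\<lambda>x. if x \<in> set xs then b x else - b x)" for b :: "'x \<Rightarrow> real"
    have flBB: "fl b \<in> BB" if "b \<in> BB" for b using that by (auto simp: fl_def BB_def)
    have flfl: "fl (fl b) = b" for b by (auto simp: fl_def)
    have Dfl: "D (fl b) xs = D b xs" for b by (auto simp: D_def fl_def)
    have disj: "A b \<inter> A (fl b) = {}" if "b \<in> BB" for b
    proof (rule ccontr)
      assume "A b \<inter> A (fl b) \<noteq> {}"
      then obtain f where f1: "f \<in> A b" and f2: "f \<in> A (fl b)" by blast
      have r1: "(\<Sum>x\<in>UNIV. (b x - f x)^2) / m \<le> 1/4 + \<epsilon>"
        using f1 INFb[OF that] unfolding A_def mu_def U_def risk_mu m_def by simp
      have r2: "(\<Sum>x\<in>UNIV. (fl b x - f x)^2) / m \<le> 1/4 + \<epsilon>"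
        using f2 INFb[OF flBB[OF that]] unfolding A_def mu_def U_def risk_mu m_def by simp
      have "(\<Sum>x\<in>UNIV. (b x - f x)^2 + (fl b x - f x)^2) \<le> 2 * (1/4 + \<epsilon>) * m"
        using r1 r2 mpos by (simp add: sum.distrib divide_le_eq algebra_simps)
      moreover have "(\<Sum>x\<in>V. (b x - f x)^2 + (fl b x - f x)^2) \<le> (\<Sum>x\<in>UNIV. (b x - f x)^2 + (fl b x - f x)^2)"
        by (intro sum_mono2) auto
      moreover have "(\<Sum>x\<in>V. (2::real)) \<le> (\<Sum>x\<in>V. (b x - f x)^2 + (fl b x - f x)^2)"
      proof (intro sum_mono)
        fix x assume "x \<in> V"
        hence "fl b x = - b x" by (simp add: V_def fl_def)
        moreover have "b x^2 = 1"
        proof -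
          have "b x = -1 \<or> b x = 1" using that by (auto simp: BB_def)
          thus ?thesis by auto
        qed
        ultimately have "(b x - f x)^2 + (fl b x - f x)^2 = 2 + 2 * (f x)^2"
          by (simp add: power2_eq_square algebra_simps)
        thus "2 \<le> (b x - f x)^2 + (fl b x - f x)^2" by simp
      qed
      ultimately have "2 * real (card V) \<le> 2 * (1/4 + \<epsilon>) * m" by simp
      thus False using cardV by (simp add: ring_distribs)
    qed
    have pair: "h b xs + h (fl b) xs \<le> 1" if "b \<in> BB" for b
      unfolding h_def Dfl by (rule prob_disj[OF ps disj[OF that]])
    have "(\<Sum>b\<in>BB. h (fl b) xs) = (\<Sum>b\<in>BB. h b xs)"
      by (rule sum.reindex_bij_witness[of _ fl fl]) (auto simp: flfl flBB)
    hence "2 * (\<Sum>b\<in>BB. h b xs) = (\<Sum>b\<in>BB. h b xs + h (fl b) xs)" by (simp add: sum.distrib)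
    also have "\<dots> \<le> (\<Sum>b\<in>BB. 1)" by (intro sum_mono pair)
    finally show ?thesis by simp
  qed
  have finrep: "finite (set_pmf (replicate_pmf n U))"
    using finite_lists_length_eq[of "UNIV::'x set" n]
    by (simp add: set_replicate_pmf U_def)
  have "real (card BB) * (1 - \<delta>) \<le> (\<Sum>b\<in>BB. success_prob n L St sq_loss \<epsilon> (mu b))"
    using sum_mono[of BB "\<lambda>_. 1 - \<delta>" "\<lambda>b. success_prob n L St sq_loss \<epsilon> (mu b)"] succ by simp
  also have "\<dots> = measure_pmf.expectation (replicate_pmf n U) (\<lambda>xs. \<Sum>b\<in>BB. h b xs)"
    unfolding sp by (subst Bochner_Integration.integral_sum) (simp_all add: integrable_measure_pmf_finite finrep)
  also have "\<dots> \<le> measure_pmf.expectation (replicate_pmf n U) (\<lambda>xs. card BB / 2)"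
    by (rule integral_mono_AE) (use key in \<open>auto simp: integrable_measure_pmf_finite finrep AE_measure_pmf_iff\<close>)
  also have "\<dots> = card BB / 2" by simp
  finally have le: "real (card BB) * (1 - \<delta>) \<le> real (card BB) * (1/2)" by simp
  moreover have "card BB > 0" using finBB BBne by (simp add: card_gt_0_iff)
  ultimately have "1 - \<delta> \<le> 1/2" by (simp add: mult_le_cancel_left_pos)
  thus False using del by simp
qed

theorem lemmaC3:
  fixes m :: nat
  assumes "CARD('x::finite) = m"
  defines "S \<equiv> {s :: 'x \<Rightarrow> real option. \<forall>x. s x \<in> {Some (-1/2), Some (1/2)}}"
      and "B \<equiv> {b :: 'x \<Rightarrow> real. \<forall>x. b x \<in> {-1, 1}}"
      and "S_total \<equiv> {s :: 'x \<Rightarrow> real. \<forall>x. s x \<in> {-1/2, 1/2}}"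
      and "B_partial \<equiv> {b :: 'x \<Rightarrow> real option. \<forall>x. b x \<in> {Some (-1), Some 1}}"
      and "\<mu>X \<equiv> pmf_of_set (UNIV :: 'x set)"
  shows "(\<forall>\<epsilon> \<delta>. \<epsilon> \<ge> 0 \<longrightarrow> \<delta> \<ge> 0 \<longrightarrow> CompR_num (\<lambda>_. True) S B sq_loss \<epsilon> \<delta> = 0)
       \<and> (\<forall>\<epsilon> \<delta>. 0 < \<epsilon> \<longrightarrow> \<epsilon> < 3/4 \<longrightarrow> 0 < \<delta> \<longrightarrow> \<delta> < 1/2 \<longrightarrow>
            ereal ((1 - sqrt (1/4 + \<epsilon>)) * real m)
              \<le> ereal_of_enat (CompR_num (\<lambda>\<mu>. map_pmf fst \<mu> = \<mu>X) B_partial S_total sq_loss \<epsilon> \<delta>))"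
  proof -
  have part2': "(1 - sqrt (1/4 + \<epsilon>)) * real m \<le> real n"
    if "0 < \<epsilon>" "\<epsilon> < 3/4" "\<delta> < 1/2"
       "is_CompR (\<lambda>\<mu>. map_pmf fst \<mu> = \<mu>X) n B_partial S_total sq_loss \<epsilon> \<delta> L" for \<epsilon> \<delta> n L
  proof -
    have a: "(3/4 - \<epsilon>) * real CARD('x) \<le> real n"
      using part2[of \<epsilon> \<delta> n L] that unfolding B_partial_def S_total_def \<mu>X_def by simp
    define t where "t = sqrt (1/4 + \<epsilon>)"
    have t2: "t^2 = 1/4 + \<epsilon>" unfolding t_def using that by simp
    have t1: "t \<le> 1" unfolding t_def using that by simp
    have t0: "t \<ge> 0" unfolding t_def using that by simp
    have "t * t \<le> t * 1" by (rule mult_left_mono[OF t1 t0])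
    hence "1 - t \<le> 3/4 - \<epsilon>" using t2 by (simp add: power2_eq_square)
    hence "(1 - t) * real m \<le> (3/4 - \<epsilon>) * real m" by (rule mult_right_mono) simp
    thus ?thesis using a assms(1) unfolding t_def by simp
  qed
  show ?thesis
  proof (intro conjI allI impI)
    fix \<epsilon> \<delta> :: real assume "\<epsilon> \<ge> 0" "\<delta> \<ge> 0"
    thus "CompR_num (\<lambda>_. True) S B sq_loss \<epsilon> \<delta> = 0"
      unfolding S_def B_def by (rule part1)
  next
    fix \<epsilon> \<delta> :: real assume h: "0 < \<epsilon>" "\<epsilon> < 3/4" "0 < \<delta>" "\<delta> < 1/2"
    show "ereal ((1 - sqrt (1/4 + \<epsilon>)) * real m)
              \<le> ereal_of_enat (CompR_num (\<lambda>\<mu>. map_pmf fst \<mu> = \<mu>X) B_partial S_total sq_loss \<epsilon> \<delta>)"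
    proof (cases "\<exists>n L. is_CompR (\<lambda>\<mu>. map_pmf fst \<mu> = \<mu>X) n B_partial S_total sq_loss \<epsilon> \<delta> L")
      case True
      define n0 where "n0 = (LEAST n. \<exists>L. is_CompR (\<lambda>\<mu>. map_pmf fst \<mu> = \<mu>X) n B_partial S_total sq_loss \<epsilon> \<delta> L)"
      have "\<exists>L. is_CompR (\<lambda>\<mu>. map_pmf fst \<mu> = \<mu>X) n0 B_partial S_total sq_loss \<epsilon> \<delta> L"
        unfolding n0_def
        using True LeastI_ex[of "\<lambda>n. \<exists>L. is_CompR (\<lambda>\<mu>. map_pmf fst \<mu> = \<mu>X) n B_partial S_total sq_loss \<epsilon> \<delta> L"]
        by blast
      then obtain L where L: "is_CompR (\<lambda>\<mu>. map_pmf fst \<mu> = \<mu>X) n0 B_partial S_total sq_loss \<epsilon> \<delta> L" by blast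
      have eq: "CompR_num (\<lambda>\<mu>. map_pmf fst \<mu> = \<mu>X) B_partial S_total sq_loss \<epsilon> \<delta> = enat n0"
        unfolding CompR_num_def n0_def using True by simp
      show ?thesis unfolding eq using part2'[OF h(1,2,4) L] by simp
    next
      case False
      hence eq: "CompR_num (\<lambda>\<mu>. map_pmf fst \<mu> = \<mu>X) B_partial S_total sq_loss \<epsilon> \<delta> = \<infinity>"
        unfolding CompR_num_def by simp
      show ?thesis unfolding eq by simp
    qed
  qed
qed

end
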